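(* Let $B(\mathbf f,\tilde{\mathbf f})=P(\mathbf f\cdot\nabla\tilde{\mathbf f}+\tilde{\mathbf f}\cdot\nabla\mathbf f)$ for smooth divergence-free mean-free fields on $\mathbf T^3$. Then: (i) for every $\mathbf k\in\mathbf Z^3\setminus\{0\}$, $B(\mathbf e,\tilde{\mathbf e})=0$ for all $\mathbf e,\tilde{\mathbf e}\in F_{\mathbf k}$; (ii) for all $\mathbf j,\mathbf k\in\mathbf Z^3\setminus\{0\}$, $\operatorname{span}\{B(\mathbf e,\tilde{\mathbf e}):\mathbf e\in F_{\mathbf j},\tilde{\mathbf e}\in F_{\mathbf k}\}\subseteq\operatorname{span}(F_{\mathbf j-\mathbf k}\cup F_{\mathbf j+\mathbf k})$, with equality whenever $\mathbf j,\mathbf k$ are linearly independent and $|\mathbf j|\ne|\mathbf k|$; (iii) $F_{(1,1,1)}\subseteq\operatorname{span}\{B(B(\mathbf e,\tilde{\mathbf e}),\tilde{\tilde{\mathbf e}}):\mathbf e,\tilde{\mathbf e},\tilde{\tilde{\mathbf e}}\in F_{(1,0,0)}\cup F_{(0,1,0)}\cup F_{(0,0,1)}\}$.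
   Context: $P$ is the Leray projection onto mean-free divergence-free vector fields on $\mathbf T^3$. For each $\mathbf k\in\mathbf Z^3\setminus\{0\}$ choose $\mathbf a^{(0)}_{\mathbf k},\mathbf a^{(1)}_{\mathbf k}\in\mathbb R^3$ with $\mathbf a^{(0)}_{\mathbf k}\cdot\mathbf k=\mathbf a^{(1)}_{\mathbf k}\cdot\mathbf k=\mathbf a^{(0)}_{\mathbf k}\cdot\mathbf a^{(1)}_{\mathbf k}=0$ and $|\mathbf a^{(0)}_{\mathbf k}|^2=|\mathbf a^{(1)}_{\mathbf k}|^2=1/(4\pi)$; set $\mathbf e_{\mathbf k,l,0}=2\mathbf a^{(l)}_{\mathbf k}\cos(\mathbf k\cdot x)$, $\mathbf e_{\mathbf k,l,1}=2\mathbf a^{(l)}_{\mathbf k}\sin(\mathbf k\cdot x)$ and $F_{\mathbf k}=\operatorname{span}\{\mathbf e_{\mathbf k,l,m}:l,m\in\{0,1\}\}$ (so $F_{\mathbf k}$ is the space of divergence-free fields $\mathbf A\cos(\mathbf k\cdot x)+\mathbf B\sin(\mathbf k\cdot x)$ with $\mathbf A,\mathbf B\perp\mathbf k$, and $F_{-\mathbf k}=F_{\mathbf k}$). By convention $F_{\mathbf 0}=\{0\}$. *)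

theory Defs
  imports "HOL-Analysis.Analysis"
begin

text \<open>Vector fields on the torus T^3 = R^3 / (2 pi Z)^3, represented as
  2pi-periodic maps R^3 -> R^3.\<close>

type_synonym vfield = "real^3 \<Rightarrow> real^3"

definition periodic_field :: "vfield \<Rightarrow> bool" where
  "periodic_field u \<longleftrightarrow> (\<forall>x i. u (x + (2 * pi) *\<^sub>R axis i 1) = u x)"

definition torus_cell :: "(real^3) set" where
  "torus_cell = cbox 0 (\<chi> i. 2 * pi)"

definition dir_deriv :: "vfield \<Rightarrow> vfield \<Rightarrow> vfield" where
  "dir_deriv a g = (\<lambda>x. frechet_derivative g (at x) (a x))"

definition divergence :: "vfield \<Rightarrow> real^3 \<Rightarrow> real" where
  "divergence u x = (\<Sum>i\<in>UNIV. frechet_derivative u (at x) (axis i 1) $ i)"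

definition solenoidal :: "vfield \<Rightarrow> bool" where
  "solenoidal v \<longleftrightarrow> periodic_field v
     \<and> (\<forall>x. v differentiable at x)
     \<and> (\<forall>i. continuous_on UNIV (\<lambda>x. frechet_derivative v (at x) (axis i 1)))
     \<and> (\<forall>x. divergence v x = 0)
     \<and> integral torus_cell v = 0"

definition leray :: "vfield \<Rightarrow> vfield" where
  "leray u = (THE v. solenoidal v \<and>
      (\<forall>w. solenoidal w \<longrightarrow> integral torus_cell (\<lambda>x. (u x - v x) \<bullet> w x) = 0))"

definition Bop :: "vfield \<Rightarrow> vfield \<Rightarrow> vfield" where
  "Bop f g = leray (\<lambda>x. dir_deriv f g x + dir_deriv g f x)"

definition kr :: "int^3 \<Rightarrow> real^3" where
  "kr k = (\<chi> i. real_of_int (k $ i))"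

definition Fk :: "int^3 \<Rightarrow> vfield set" where
  "Fk k = (if k = 0 then {\<lambda>x. 0} else
     {(\<lambda>x. cos (kr k \<bullet> x) *\<^sub>R A + sin (kr k \<bullet> x) *\<^sub>R B) | A B.
         A \<bullet> kr k = 0 \<and> B \<bullet> kr k = 0})"

definition fspan :: "vfield set \<Rightarrow> vfield set" where
  "fspan S = {(\<lambda>x. \<Sum>e\<in>T. c e *\<^sub>R e x) | T c. finite T \<and> T \<subseteq> S}"

end

theory Submission
  imports Defs "HOL-Analysis.Cross3"
begin

definition tf :: "int^3 \<Rightarrow> real^3 \<Rightarrow> real^3 \<Rightarrow> vfield" where
  "tf m C D = (\<lambda>x. cos (kr m \<bullet> x) *\<^sub>R C + sin (kr m \<bullet> x) *\<^sub>R D)"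

definition dtf :: "int^3 \<Rightarrow> real^3 \<Rightarrow> real^3 \<Rightarrow> real^3 \<Rightarrow> real^3 \<Rightarrow> real^3" where
  "dtf m C D x h = (kr m \<bullet> h) *\<^sub>R (cos (kr m \<bullet> x) *\<^sub>R D - sin (kr m \<bullet> x) *\<^sub>R C)"

lemma tf_deriv: "(tf m C D has_derivative dtf m C D x) (at x)"
  unfolding tf_def dtf_def
  apply (rule derivative_eq_intros refl | simp)+
  apply (rule ext) apply (simp add: algebra_simps)
  done

type_synonym trm = "(int^3) \<times> (real^3) \<times> (real^3)"

definition tp :: "trm list \<Rightarrow> vfield" where
  "tp L = (\<lambda>x. sum_list (map (\<lambda>(m,C,D). tf m C D x) L))"

definition DDf :: "trm list \<Rightarrow> real^3 \<Rightarrow> real^3 \<Rightarrow> real^3" where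
  "DDf L x h = sum_list (map (\<lambda>(m,C,D). dtf m C D x h) L)"

lemma tp_Nil[simp]: "tp [] x = 0" by (simp add: tp_def)
lemma tp_Cons[simp]: "tp ((m,C,D)#L) x = tf m C D x + tp L x" by (simp add: tp_def)
lemma tp_append[simp]: "tp (L1 @ L2) x = tp L1 x + tp L2 x" by (simp add: tp_def)
lemma DDf_Nil[simp]: "DDf [] x h = 0" by (simp add: DDf_def)
lemma DDf_Cons[simp]: "DDf ((m,C,D)#L) x h = dtf m C D x h + DDf L x h" by (simp add: DDf_def)
lemma DDf_append[simp]: "DDf (L1 @ L2) x h = DDf L1 x h + DDf L2 x h" by (simp add: DDf_def)

lemma tp_deriv: "(tp L has_derivative DDf L x) (at x)"
proof (induction L)
  case Nil
  then show ?case by (simp add: tp_def DDf_def[abs_def])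
next
  case (Cons a L)
  obtain m C D where a: "a = (m,C,D)" by (cases a) auto
  have "((\<lambda>x. tf m C D x + tp L x) has_derivative (\<lambda>h. dtf m C D x h + DDf L x h)) (at x)"
    by (rule has_derivative_add[OF tf_deriv Cons.IH])
  moreover have "(\<lambda>x. tf m C D x + tp L x) = tp (a#L)" by (rule ext) (simp add: a)
  moreover have "(\<lambda>h. dtf m C D x h + DDf L x h) = DDf (a#L) x" by (rule ext) (simp add: a)
  ultimately show ?case by simp
qed

lemma tp_frechet: "frechet_derivative (tp L) (at x) = DDf L x"
  using tp_deriv frechet_derivative_at by metis

lemma tp_differentiable: "tp L differentiable at x"
  using tp_deriv differentiable_def by blast

lemma tp_continuous: "continuous_on S (tp L)"
  by (meson differentiable_imp_continuous_on differentiable_on_def tp_differentiable differentiable_at_withinI)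

lemma dtf_linear: "dtf m C D x (a + b) = dtf m C D x a + dtf m C D x b"
  "dtf m C D x (c *\<^sub>R a) = c *\<^sub>R dtf m C D x a" "dtf m C D x 0 = 0"
  by (simp_all add: dtf_def inner_add_right scaleR_add_left)

lemma DDf_add: "DDf L x (a + b) = DDf L x a + DDf L x b"
  by (induction L rule: list.induct) (auto simp: dtf_linear)
lemma DDf_zero[simp]: "DDf L x 0 = 0"
  by (induction L rule: list.induct) (auto simp: dtf_linear)

lemma DDf_cont: "continuous_on S (\<lambda>x. DDf L x h)"
proof (induction L)
  case Nil then show ?case by simp
next
  case (Cons a L)
  obtain m C D where a: "a = (m,C,D)" by (cases a) auto
  show ?case unfolding a DDf_Cons dtf_def
    by (intro continuous_intros Cons.IH)
qed

lemma dir_deriv_tp: "dir_deriv (tp L1) (tp L2) x = DDf L2 x (tp L1 x)"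
  by (simp add: dir_deriv_def tp_frechet)



definition ddT :: "trm \<Rightarrow> trm \<Rightarrow> trm list" where
  "ddT p q = (case p of (j,A,B) \<Rightarrow> case q of (k,C,D) \<Rightarrow>
     [(j+k, (1/2) *\<^sub>R ((A \<bullet> kr k) *\<^sub>R D + (B \<bullet> kr k) *\<^sub>R C + (C \<bullet> kr j) *\<^sub>R B + (D \<bullet> kr j) *\<^sub>R A),
            (1/2) *\<^sub>R (- (A \<bullet> kr k) *\<^sub>R C + (B \<bullet> kr k) *\<^sub>R D - (C \<bullet> kr j) *\<^sub>R A + (D \<bullet> kr j) *\<^sub>R B)),
      (j-k, (1/2) *\<^sub>R ((A \<bullet> kr k) *\<^sub>R D - (B \<bullet> kr k) *\<^sub>R C + (C \<bullet> kr j) *\<^sub>R B - (D \<bullet> kr j) *\<^sub>R A),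
            (1/2) *\<^sub>R ((A \<bullet> kr k) *\<^sub>R C + (B \<bullet> kr k) *\<^sub>R D - (C \<bullet> kr j) *\<^sub>R A - (D \<bullet> kr j) *\<^sub>R B))])"

lemma kr_add: "kr (j + k) = kr j + kr k" by (simp add: kr_def vec_eq_iff)
lemma kr_diff: "kr (j - k) = kr j - kr k" by (simp add: kr_def vec_eq_iff)
lemma kr_uminus: "kr (- k) = - kr k" by (simp add: kr_def vec_eq_iff)
lemma kr_zero[simp]: "kr 0 = 0" by (simp add: kr_def vec_eq_iff)
lemma kr_eq_0[simp]: "kr k = 0 \<longleftrightarrow> k = 0" by (simp add: kr_def vec_eq_iff)

lemma pair_alg:
  fixes A B C D j k :: "real^3"
  shows "(k \<bullet> (cj *\<^sub>R A + sj *\<^sub>R B)) *\<^sub>R (ck *\<^sub>R D - sk *\<^sub>R C)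
       + (j \<bullet> (ck *\<^sub>R C + sk *\<^sub>R D)) *\<^sub>R (cj *\<^sub>R B - sj *\<^sub>R A)
     = (cj * ck - sj * sk) *\<^sub>R ((1/2) *\<^sub>R ((A \<bullet> k) *\<^sub>R D + (B \<bullet> k) *\<^sub>R C + (C \<bullet> j) *\<^sub>R B + (D \<bullet> j) *\<^sub>R A))
     + (sj * ck + cj * sk) *\<^sub>R ((1/2) *\<^sub>R (- (A \<bullet> k) *\<^sub>R C + (B \<bullet> k) *\<^sub>R D - (C \<bullet> j) *\<^sub>R A + (D \<bullet> j) *\<^sub>R B))
     + (cj * ck + sj * sk) *\<^sub>R ((1/2) *\<^sub>R ((A \<bullet> k) *\<^sub>R D - (B \<bullet> k) *\<^sub>R C + (C \<bullet> j) *\<^sub>R B - (D \<bullet> j) *\<^sub>R A))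
     + (sj * ck - cj * sk) *\<^sub>R ((1/2) *\<^sub>R ((A \<bullet> k) *\<^sub>R C + (B \<bullet> k) *\<^sub>R D - (C \<bullet> j) *\<^sub>R A - (D \<bullet> j) *\<^sub>R B))"
  unfolding vec_eq_iff by (simp add: inner_add_right inner_commute field_simps)

lemma pair_id: "DDf [q] x (tf (fst p) (fst (snd p)) (snd (snd p)) x)
   + DDf [p] x (tf (fst q) (fst (snd q)) (snd (snd q)) x) = tp (ddT p q) x"
proof -
  obtain j A B where p: "p = (j,A,B)" by (cases p) auto
  obtain k C D where q: "q = (k,C,D)" by (cases q) auto
  show ?thesis
    unfolding p q ddT_def
    apply (simp add: tf_def dtf_def kr_add kr_diff inner_add_left inner_diff_left inner_add_right inner_diff_right
       cos_add sin_add cos_diff sin_diff inner_commute)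
    apply (simp add: vec_eq_iff field_simps)
    done
qed

definition bopRaw :: "trm list \<Rightarrow> trm list \<Rightarrow> trm list" where
  "bopRaw L1 L2 = concat (map (\<lambda>p. concat (map (\<lambda>q. ddT p q) L2)) L1)"

lemma tp_concat: "tp (concat Ls) x = sum_list (map (\<lambda>L. tp L x) Ls)"
  by (induction Ls) auto

lemma DDf_single_sum: "DDf L x h = sum_list (map (\<lambda>q. DDf [q] x h) L)"
proof (induction L)
  case (Cons a L) then show ?case by (cases a) auto
qed simp

lemma E_aux: "DDf L2 x (tf j A B x) + DDf [(j,A,B)] x (tp L2 x) = tp (concat (map (\<lambda>q. ddT (j,A,B) q) L2)) x"
proof (induction L2)
  case Nil then show ?case by simp
next
  case (Cons q L2)
  obtain k C D where q: "q = (k,C,D)" by (cases q) auto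
  have pid: "DDf [q] x (tf j A B x) + DDf [(j,A,B)] x (tf k C D x) = tp (ddT (j,A,B) q) x"
    using pair_id[of q x "(j,A,B)"] by (simp add: q)
  have "DDf (q#L2) x (tf j A B x) + DDf [(j,A,B)] x (tp (q#L2) x)
     = (DDf [q] x (tf j A B x) + DDf [(j,A,B)] x (tf k C D x))
       + (DDf L2 x (tf j A B x) + DDf [(j,A,B)] x (tp L2 x))"
    by (simp add: q DDf_add algebra_simps)
  also have "\<dots> = tp (concat (map (\<lambda>q. ddT (j,A,B) q) (q#L2))) x"
    using pid Cons.IH by simp
  finally show ?case .
qed

lemma E_lemma: "dir_deriv (tp L1) (tp L2) x + dir_deriv (tp L2) (tp L1) x = tp (bopRaw L1 L2) x"
  unfolding dir_deriv_tp bopRaw_def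
proof (induction L1)
  case Nil then show ?case by simp
next
  case (Cons p L1)
  obtain j A B where p: "p = (j,A,B)" by (cases p) auto
  have "DDf L2 x (tp (p#L1) x) + DDf (p#L1) x (tp L2 x)
      = (DDf L2 x (tf j A B x) + DDf [(j,A,B)] x (tp L2 x)) + (DDf L2 x (tp L1 x) + DDf L1 x (tp L2 x))"
    by (simp add: p DDf_add algebra_simps)
  also have "\<dots> = tp (concat (map (ddT (j, A, B)) L2)) x + tp (concat (map (\<lambda>p. concat (map (ddT p) L2)) L1)) x"
    using Cons.IH E_aux[of L2 x j A B] by simp
  finally show ?case by (simp add: p)
qed



lemma cell_eq: "torus_cell = cbox 0 (\<chi> i. 2 * pi)" by (simp add: torus_cell_def)

lemma axis_comp: "axis i (1::real) $ j = (if j = i then 1 else 0)" by (simp add: axis_def)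
lemma inner_axis': "(x::real^3) \<bullet> axis i 1 = x $ i" by (simp add: inner_axis)

lemma transl:
  fixes f :: "real^3 \<Rightarrow> real"
  assumes cf: "continuous_on UNIV f"
    and per: "\<And>x. f (x + (2*pi) *\<^sub>R axis i 1) = f x"
    and t: "0 \<le> t" "t \<le> 2*pi"
  shows "integral torus_cell (\<lambda>x. f (x + t *\<^sub>R axis i 1)) = integral torus_cell f"
proof -
  define e :: "real^3" where "e = axis i 1"
  define P :: "real^3" where "P = (\<chi> i. 2 * pi)"
  define Q where "Q = P - (2*pi - t) *\<^sub>R e"
  have eB: "e \<in> Basis" by (simp add: e_def)
  have int: "\<And>a b. f integrable_on cbox a b"
    by (rule integrable_continuous) (use cf continuous_on_subset in blast)
  have s1: "integral (cbox 0 P) (\<lambda>x. f (x + t *\<^sub>R e)) = integral (cbox (t *\<^sub>R e) (P + t *\<^sub>R e)) f"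
  proof -
    have "(f has_integral integral (cbox (0 + t *\<^sub>R e) (P + t *\<^sub>R e)) f) (cbox (0 + t *\<^sub>R e) (P + t *\<^sub>R e))"
      using int by blast
    then have "((f \<circ> (+) (t *\<^sub>R e)) has_integral integral (cbox (0 + t *\<^sub>R e) (P + t *\<^sub>R e)) f) (cbox 0 P)"
      using has_integral_shift_cbox_iff by blast
    then show ?thesis by (simp add: o_def add.commute integral_unique)
  qed
  have split1: "integral (cbox 0 P) f = integral (cbox 0 Q) f + integral (cbox (t *\<^sub>R e) P) f"
  proof -
    have a: "cbox 0 P \<inter> {x. x \<bullet> e \<le> t} = cbox 0 Q"
      using t by (auto simp: mem_box_cart Q_def P_def e_def inner_axis' axis_comp split: if_splits) (smt (verit))+
    have b: "cbox 0 P \<inter> {x. t \<le> x \<bullet> e} = cbox (t *\<^sub>R e) P"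
      using t by (auto simp: mem_box_cart Q_def P_def e_def inner_axis' axis_comp split: if_splits) (smt (verit))+
    show ?thesis using integral_split[OF int eB, of 0 P t] a b by simp
  qed
  have split2: "integral (cbox (t *\<^sub>R e) (P + t *\<^sub>R e)) f
      = integral (cbox (t *\<^sub>R e) P) f + integral (cbox (0 + (2*pi) *\<^sub>R e) (Q + (2*pi) *\<^sub>R e)) f"
  proof -
    have a: "cbox (t *\<^sub>R e) (P + t *\<^sub>R e) \<inter> {x. x \<bullet> e \<le> 2*pi} = cbox (t *\<^sub>R e) P"
      using t by (auto simp: mem_box_cart Q_def P_def e_def inner_axis' axis_comp split: if_splits) (smt (verit))+
    have b: "cbox (t *\<^sub>R e) (P + t *\<^sub>R e) \<inter> {x. 2*pi \<le> x \<bullet> e} = cbox (0 + (2*pi) *\<^sub>R e) (Q + (2*pi) *\<^sub>R e)"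
      using t by (auto simp: mem_box_cart Q_def P_def e_def inner_axis' axis_comp split: if_splits) (smt (verit))+
    show ?thesis using integral_split[OF int eB, of "t *\<^sub>R e" "P + t *\<^sub>R e" "2*pi"] a b by simp
  qed
  have s3: "integral (cbox (0 + (2*pi) *\<^sub>R e) (Q + (2*pi) *\<^sub>R e)) f = integral (cbox 0 Q) f"
  proof -
    have "(f has_integral integral (cbox (0 + (2*pi) *\<^sub>R e) (Q + (2*pi) *\<^sub>R e)) f) (cbox (0 + (2*pi) *\<^sub>R e) (Q + (2*pi) *\<^sub>R e))"
      using int by blast
    then have "((f \<circ> (+) ((2*pi) *\<^sub>R e)) has_integral integral (cbox (0 + (2*pi) *\<^sub>R e) (Q + (2*pi) *\<^sub>R e)) f) (cbox 0 Q)"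
      using has_integral_shift_cbox_iff by blast
    moreover have "f \<circ> (+) ((2*pi) *\<^sub>R e) = f" using per by (auto simp: e_def add.commute)
    ultimately show ?thesis by (simp add: integral_unique)
  qed
  show ?thesis unfolding cell_eq P_def[symmetric] e_def[symmetric]
    using s1 split1 split2 s3 by simp
qed

lemma transl2:
  fixes f :: "real^3 \<Rightarrow> real"
  assumes cf: "continuous_on UNIV f"
    and per: "\<And>x. f (x + (2*pi) *\<^sub>R axis i 1) = f x"
    and t: "-2*pi \<le> t" "t \<le> 2*pi"
  shows "integral torus_cell (\<lambda>x. f (x + t *\<^sub>R axis i 1)) = integral torus_cell f"
proof (cases "0 \<le> t")
  case True then show ?thesis using transl[OF cf per] t by blast
next
  case False
  have "(\<lambda>x. f (x + t *\<^sub>R axis i 1)) = (\<lambda>x. f (x + (t + 2*pi) *\<^sub>R axis i 1))"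
    using per[of "_ + t *\<^sub>R axis i 1"] by (simp add: scaleR_add_left add.assoc)
  then show ?thesis using transl[OF cf per, of "t + 2*pi"] t False by simp
qed

lemma core:
  fixes f :: "real^3 \<Rightarrow> real" and f' :: "real^3 \<Rightarrow> real^3 \<Rightarrow> real"
  assumes der: "\<And>x. (f has_derivative f' x) (at x)"
    and cont: "continuous_on UNIV (\<lambda>x. f' x (axis i 1))"
    and per: "\<And>x. f (x + (2*pi) *\<^sub>R axis i 1) = f x"
  shows "integral torus_cell (\<lambda>x. f' x (axis i 1)) = 0"
proof -
  define e :: "real^3" where "e = axis i 1"
  define P :: "real^3" where "P = (\<chi> i. 2 * pi)"
  define \<Phi> where "\<Phi> t = integral (cbox 0 P) (\<lambda>x. f (x + t *\<^sub>R e))" for t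
  have cf: "continuous_on UNIV f"
    using der by (meson continuous_at_imp_continuous_on has_derivative_continuous)
  have lin: "\<And>y. linear (f' y)" using der has_derivative_linear by blast
  have fd: "((\<lambda>t. f (x + t *\<^sub>R e)) has_field_derivative f' (x + t *\<^sub>R e) e) (at t within UNIV)" for x t
  proof -
    have "((\<lambda>t. x + t *\<^sub>R e) has_derivative (\<lambda>s. s *\<^sub>R e)) (at t)"
      by (auto intro!: derivative_eq_intros)
    from has_derivative_compose[OF this der]
    have "((\<lambda>t. f (x + t *\<^sub>R e)) has_derivative (\<lambda>s. f' (x + t *\<^sub>R e) (s *\<^sub>R e))) (at t)" by (simp add: o_def)
    moreover have "(\<lambda>s. f' (x + t *\<^sub>R e) (s *\<^sub>R e)) = (*) (f' (x + t *\<^sub>R e) e)"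
      using linear_scale[OF lin] by (auto simp: mult.commute)
    ultimately show ?thesis by (simp add: has_field_derivative_def)
  qed
  have "(\<Phi> has_field_derivative integral (cbox 0 P) (\<lambda>x. f' (x + 0 *\<^sub>R e) e)) (at 0 within UNIV)"
    unfolding \<Phi>_def
  proof (rule leibniz_rule_field_derivative[where fx = "\<lambda>t x. f' (x + t *\<^sub>R e) e"])
    show "\<And>x t. x \<in> UNIV \<Longrightarrow> t \<in> cbox 0 P \<Longrightarrow> ((\<lambda>x. f (t + x *\<^sub>R e)) has_field_derivative f' (t + x *\<^sub>R e) e) (at x within UNIV)"
      using fd by blast
    show "(\<lambda>t. f (t + x *\<^sub>R e)) integrable_on cbox 0 P" for x
    proof -
      have c: "continuous_on UNIV (\<lambda>t::real^3. t + x *\<^sub>R e)" by (intro continuous_intros)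
      have "continuous_on UNIV (\<lambda>t. f (t + x *\<^sub>R e))" using continuous_on_compose2[OF cf c] by simp
      then show ?thesis by (rule integrable_continuous[OF continuous_on_subset[OF _ subset_UNIV]])
    qed
    show "continuous_on (UNIV \<times> cbox 0 P) (\<lambda>(x, t). f' (t + x *\<^sub>R e) e)"
    proof -
      have c1: "continuous_on (UNIV \<times> cbox 0 P) (\<lambda>x. snd x + fst x *\<^sub>R e)"
        by (intro continuous_intros)
      show ?thesis using continuous_on_compose2[OF cont[folded e_def] c1] by (simp add: case_prod_unfold)
    qed
  qed auto
  then have d1: "(\<Phi> has_field_derivative integral torus_cell (\<lambda>x. f' x e)) (at 0)"
    by (simp add: cell_eq P_def)
  have eqc: "\<Phi> t = \<Phi> 0" if "t \<in> {-2*pi<..<2*pi}" for t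
    using transl2[OF cf per, of t] that by (simp add: \<Phi>_def P_def e_def cell_eq)
  have h1: "((\<lambda>_. \<Phi> 0) has_field_derivative integral torus_cell (\<lambda>x. f' x e)) (at 0)"
    by (rule has_field_derivative_transform_within_open[OF d1, of "{-2*pi<..<2*pi}"]) (auto simp del: greaterThanLessThan_iff intro: eqc, simp)
  have h2: "((\<lambda>_. \<Phi> 0) has_field_derivative 0) (at 0)" by simp
  show ?thesis using DERIV_unique[OF h1 h2] unfolding e_def .
qed



lemma inner_axis_shift: "kr m \<bullet> (x + c *\<^sub>R axis i 1) = kr m \<bullet> x + c * real_of_int (m $ i)"
  by (simp add: inner_add_right inner_axis' kr_def)

lemma cos_shift: "cos (kr m \<bullet> (x + (2*pi) *\<^sub>R axis i 1)) = cos (kr m \<bullet> x)"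
  by (simp add: inner_axis_shift cos_add)
lemma sin_shift: "sin (kr m \<bullet> (x + (2*pi) *\<^sub>R axis i 1)) = sin (kr m \<bullet> x)"
  by (simp add: inner_axis_shift sin_add)

lemma tf_per: "tf m C D (x + (2*pi) *\<^sub>R axis i 1) = tf m C D x"
  by (simp add: tf_def cos_shift sin_shift)

lemma tp_per: "tp L (x + (2*pi) *\<^sub>R axis i 1) = tp L x"
  by (simp add: tp_def tf_per)

lemma tf_cont: "continuous_on S (tf m C D)"
  unfolding tf_def by (intro continuous_intros)

lemma int_cos_sin:
  assumes "m \<noteq> 0"
  shows "integral torus_cell (\<lambda>x. cos (kr m \<bullet> x)) = 0" "integral torus_cell (\<lambda>x. sin (kr m \<bullet> x)) = 0"
proof -
  obtain i where mi: "m $ i \<noteq> 0" using assms by (auto simp: vec_eq_iff)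
  define k where "k = real_of_int (m $ i)"
  have k0: "k \<noteq> 0" using mi by (simp add: k_def)
  have kk: "kr m \<bullet> axis i 1 = k" by (simp add: inner_axis' kr_def k_def)
  have d1: "((\<lambda>x. sin (kr m \<bullet> x) / k) has_derivative (\<lambda>h. cos (kr m \<bullet> x) * (kr m \<bullet> h) / k)) (at x)" for x
    using k0 by (auto intro!: derivative_eq_intros)
  have "integral torus_cell (\<lambda>x. cos (kr m \<bullet> x) * (kr m \<bullet> axis i 1) / k) = 0"
    using k0 by (intro core[OF d1]) (auto intro!: continuous_intros simp: sin_shift)
  moreover have "(\<lambda>x. cos (kr m \<bullet> x) * (kr m \<bullet> axis i 1) / k) = (\<lambda>x. cos (kr m \<bullet> x))"
    using k0 by (simp add: kk)
  ultimately show "integral torus_cell (\<lambda>x. cos (kr m \<bullet> x)) = 0" by simp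
  have d2: "((\<lambda>x. - cos (kr m \<bullet> x) / k) has_derivative (\<lambda>h. sin (kr m \<bullet> x) * (kr m \<bullet> h) / k)) (at x)" for x
    using k0 by (auto intro!: derivative_eq_intros)
  have "integral torus_cell (\<lambda>x. sin (kr m \<bullet> x) * (kr m \<bullet> axis i 1) / k) = 0"
    using k0 by (intro core[OF d2]) (auto intro!: continuous_intros simp: cos_shift)
  moreover have "(\<lambda>x. sin (kr m \<bullet> x) * (kr m \<bullet> axis i 1) / k) = (\<lambda>x. sin (kr m \<bullet> x))"
    using k0 by (simp add: kk)
  ultimately show "integral torus_cell (\<lambda>x. sin (kr m \<bullet> x)) = 0" by simp
qed

lemma int_scaleR: "f integrable_on S \<Longrightarrow> integral S (\<lambda>x. f x *\<^sub>R c) = integral S f *\<^sub>R c"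
  by (rule integral_unique[OF has_integral_scaleR_left[OF integrable_integral]])

lemma integrable_cell: fixes f :: "real^3 \<Rightarrow> 'b::banach" assumes "continuous_on UNIV f" shows "f integrable_on torus_cell"
  using assms unfolding cell_eq by (rule integrable_continuous[OF continuous_on_subset[OF _ subset_UNIV]])

lemma int_tf: "m \<noteq> 0 \<Longrightarrow> integral torus_cell (tf m C D) = 0"
proof -
  assume m: "m \<noteq> 0"
  have i1: "(\<lambda>x. cos (kr m \<bullet> x) *\<^sub>R C) integrable_on torus_cell" "(\<lambda>x. sin (kr m \<bullet> x) *\<^sub>R D) integrable_on torus_cell"
    by (auto intro!: integrable_cell continuous_intros)
  have i2: "(\<lambda>x. cos (kr m \<bullet> x)) integrable_on torus_cell" "(\<lambda>x. sin (kr m \<bullet> x)) integrable_on torus_cell"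
    by (auto intro!: integrable_cell continuous_intros)
  show ?thesis unfolding tf_def
    by (simp add: integral_add[OF i1] int_scaleR[OF i2(1)] int_scaleR[OF i2(2)] int_cos_sin[OF m])
qed

definition okT :: "trm \<Rightarrow> bool" where
  "okT t = (case t of (m,C,D) \<Rightarrow> C \<bullet> kr m = 0 \<and> D \<bullet> kr m = 0 \<and> (m = 0 \<longrightarrow> C = 0 \<and> D = 0))"

lemma tf_zero[simp]: "tf m 0 0 = (\<lambda>x. 0)" by (simp add: tf_def)

lemma int_tp: "\<forall>t\<in>set L. okT t \<Longrightarrow> integral torus_cell (tp L) = 0"
proof (induction L)
  case Nil then show ?case by (simp add: tp_def)
next
  case (Cons a L)
  obtain m C D where a: "a = (m,C,D)" by (cases a) auto
  have "tp (a#L) = (\<lambda>x. tf m C D x + tp L x)" by (rule ext) (simp add: a)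
  moreover have "integral torus_cell (\<lambda>x. tf m C D x + tp L x) = integral torus_cell (tf m C D) + integral torus_cell (tp L)"
    by (rule integral_add; rule integrable_cell; simp add: tf_cont tp_continuous)
  moreover have "integral torus_cell (tf m C D) = 0"
    using Cons.prems a int_tf[of m C D] by (cases "m = 0") (auto simp: okT_def)
  ultimately show ?case using Cons by simp
qed

lemma div_dtf: "(\<Sum>i\<in>UNIV. dtf m C D x (axis i 1) $ i) = cos (kr m \<bullet> x) * (kr m \<bullet> D) - sin (kr m \<bullet> x) * (kr m \<bullet> C)"
proof -
  have "\<And>i. dtf m C D x (axis i 1) $ i = cos (kr m \<bullet> x) * (kr m $ i * D $ i) - sin (kr m \<bullet> x) * (kr m $ i * C $ i)"
    by (simp add: dtf_def inner_axis' algebra_simps)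
  then have "(\<Sum>i\<in>UNIV. dtf m C D x (axis i 1) $ i) = cos (kr m \<bullet> x) * (\<Sum>i\<in>UNIV. kr m $ i * D $ i) - sin (kr m \<bullet> x) * (\<Sum>i\<in>UNIV. kr m $ i * C $ i)"
    by (simp add: sum_subtractf sum_distrib_left)
  also have "\<dots> = cos (kr m \<bullet> x) * (kr m \<bullet> D) - sin (kr m \<bullet> x) * (kr m \<bullet> C)"
    by (simp add: inner_vec_def)
  finally show ?thesis .
qed

lemma div_DDf: "(\<Sum>i\<in>UNIV. DDf L x (axis i 1) $ i) = sum_list (map (\<lambda>(m,C,D). cos (kr m \<bullet> x) * (kr m \<bullet> D) - sin (kr m \<bullet> x) * (kr m \<bullet> C)) L)"
proof (induction L)
  case Nil then show ?case by simp
next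
  case (Cons a L)
  obtain m C D where a: "a = (m,C,D)" by (cases a) auto
  show ?case using Cons by (simp add: a sum.distrib div_dtf)
qed

lemma sol_tp: "\<forall>t\<in>set L. okT t \<Longrightarrow> solenoidal (tp L)"
proof -
  assume ok: "\<forall>t\<in>set L. okT t"
  have dv: "divergence (tp L) x = 0" for x
  proof -
    have "divergence (tp L) x = (\<Sum>i\<in>UNIV. DDf L x (axis i 1) $ i)"
      by (simp add: divergence_def tp_frechet)
    also have "\<dots> = 0" unfolding div_DDf using ok
      by (induction L) (auto simp: okT_def inner_commute)
    finally show ?thesis .
  qed
  show ?thesis unfolding solenoidal_def periodic_field_def
    using dv int_tp[OF ok] by (simp add: tp_per tp_differentiable tp_frechet DDf_cont)
qed



lemma sol_parts:
  assumes "solenoidal w"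
  shows "\<And>x i. w (x + (2*pi) *\<^sub>R axis i 1) = w x"
    and "\<And>x. (w has_derivative frechet_derivative w (at x)) (at x)"
    and "\<And>i. continuous_on UNIV (\<lambda>x. frechet_derivative w (at x) (axis i 1))"
    and "\<And>x. divergence w x = 0"
    and "integral torus_cell w = 0"
    and "continuous_on UNIV w"
proof -
  show "\<And>x i. w (x + (2*pi) *\<^sub>R axis i 1) = w x" using assms by (simp add: solenoidal_def periodic_field_def)
  show d: "\<And>x. (w has_derivative frechet_derivative w (at x)) (at x)"
    using assms by (simp add: solenoidal_def frechet_derivative_works)
  show "\<And>i. continuous_on UNIV (\<lambda>x. frechet_derivative w (at x) (axis i 1))"
    using assms by (simp add: solenoidal_def)
  show "\<And>x. divergence w x = 0" "integral torus_cell w = 0" using assms by (simp_all add: solenoidal_def)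
  show "continuous_on UNIV w"
    using d by (meson continuous_at_imp_continuous_on has_derivative_continuous)
qed

lemma vec3_expand: "(v::real^3) = v$1 *\<^sub>R axis 1 1 + v$2 *\<^sub>R axis 2 1 + v$3 *\<^sub>R axis 3 1"
  by (simp add: vec_eq_iff forall_3 axis_comp)

lemma div_lemma:
  fixes \<phi> :: "real^3 \<Rightarrow> real" and \<phi>' :: "real^3 \<Rightarrow> real^3 \<Rightarrow> real"
  assumes der: "\<And>x. (\<phi> has_derivative \<phi>' x) (at x)"
    and cont: "\<And>i. continuous_on UNIV (\<lambda>x. \<phi>' x (axis i 1))"
    and per: "\<And>x i. \<phi> (x + (2*pi) *\<^sub>R axis i 1) = \<phi> x"
    and w: "solenoidal w"
  shows "integral torus_cell (\<lambda>x. \<phi>' x (w x)) = 0"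
proof -
  note wp = sol_parts[OF w]
  define W' where "W' x = frechet_derivative w (at x)" for x
  have cphi: "continuous_on UNIV \<phi>"
    using der by (meson continuous_at_imp_continuous_on has_derivative_continuous)
  have lin: "\<And>y. linear (\<phi>' y)" using der has_derivative_linear by blast
  define g' where "g' i x = \<phi>' x (axis i 1) * w x $ i + \<phi> x * W' x (axis i 1) $ i" for i x
  have dg: "((\<lambda>x. \<phi> x * w x $ i) has_derivative (\<lambda>h. \<phi>' x h * w x $ i + \<phi> x * W' x h $ i)) (at x)" for i x
  proof -
    have c: "((\<lambda>x. w x $ i) has_derivative (\<lambda>h. W' x h $ i)) (at x)"
      using bounded_linear.has_derivative[OF bounded_linear_vec_nth wp(2)] by (simp add: W'_def)
    show ?thesis using has_derivative_mult[OF der c] by (simp add: algebra_simps)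
  qed
  have cg: "continuous_on UNIV (g' i)" for i
  proof -
    have c1: "continuous_on UNIV (\<lambda>x. W' x (axis i 1) $ i)"
      unfolding W'_def by (intro continuous_intros wp(3))
    have c2: "continuous_on UNIV (\<lambda>x. w x $ i)" by (intro continuous_intros wp(6))
    show ?thesis unfolding g'_def by (intro continuous_on_add continuous_on_mult cont cphi c1 c2)
  qed
  have zi: "integral torus_cell (g' i) = 0" for i
  proof -
    have "integral torus_cell (\<lambda>x. \<phi>' x (axis i 1) * w x $ i + \<phi> x * W' x (axis i 1) $ i) = 0"
      by (rule core[OF dg]) (use cg in \<open>simp_all add: g'_def per wp(1)\<close>)
    then show ?thesis by (simp add: g'_def[abs_def])
  qed
  have "integral torus_cell (\<lambda>x. \<Sum>i\<in>UNIV. g' i x) = (\<Sum>i\<in>UNIV. integral torus_cell (g' i))"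
    by (rule integral_sum) (auto intro: integrable_cell cg)
  also have "\<dots> = 0" using zi by simp
  finally have s0: "integral torus_cell (\<lambda>x. \<Sum>i\<in>UNIV. g' i x) = 0" .
  have "(\<Sum>i\<in>UNIV. g' i x) = \<phi>' x (w x)" for x
  proof -
    have "(\<Sum>i\<in>UNIV. g' i x) = (\<Sum>i\<in>UNIV. \<phi>' x (axis i 1) * w x $ i) + \<phi> x * divergence w x"
      by (simp add: g'_def sum.distrib divergence_def W'_def sum_distrib_left)
    also have "\<dots> = (\<Sum>i\<in>UNIV. \<phi>' x (axis i 1) * w x $ i)" using wp(4) by simp
    also have "\<dots> = \<phi>' x (w x $ 1 *\<^sub>R axis 1 1 + w x $ 2 *\<^sub>R axis 2 1 + w x $ 3 *\<^sub>R axis 3 1)"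
      by (simp add: sum_3 linear_add[OF lin] linear_scale[OF lin] mult.commute)
    also have "\<dots> = \<phi>' x (w x)"
      by (rule arg_cong[where f="\<phi>' x", OF vec3_expand[symmetric]])
    finally show ?thesis .
  qed
  then show ?thesis using s0 by simp
qed



definition prj :: "int^3 \<Rightarrow> real^3 \<Rightarrow> real^3" where
  "prj m C = (if m = 0 then 0 else C - ((C \<bullet> kr m) / (kr m \<bullet> kr m)) *\<^sub>R kr m)"

definition prjT :: "trm \<Rightarrow> trm" where
  "prjT t = (case t of (m,C,D) \<Rightarrow> (m, prj m C, prj m D))"

lemma prj_orth: "prj m C \<bullet> kr m = 0"
proof (cases "m = 0")
  case False
  then have "kr m \<bullet> kr m \<noteq> 0" by simp
  then show ?thesis by (simp add: prj_def inner_diff_left)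
qed (simp add: prj_def)

lemma okT_prjT: "okT (prjT t)"
  using prj_orth by (cases t) (auto simp: okT_def prjT_def prj_def)

lemma tf_diff: "tf m C D x - tf m C' D' x = tf m (C - C') (D - D') x"
  by (simp add: tf_def algebra_simps)

lemma tf_add: "tf m C D x + tf m C' D' x = tf m (C + C') (D + D') x"
  by (simp add: tf_def algebra_simps)

lemma orth_term:
  assumes w: "solenoidal w"
  shows "integral torus_cell (\<lambda>x. tf m (C - prj m C) (D - prj m D) x \<bullet> w x) = 0"
proof (cases "m = 0")
  case True
  note wp = sol_parts[OF w]
  have "integral torus_cell (\<lambda>x. C \<bullet> w x) = C \<bullet> integral torus_cell w"
    using integral_linear[OF integrable_cell[OF wp(6)] bounded_linear_inner_right[of C]] by (simp add: o_def)
  then show ?thesis using True wp(5) by (simp add: tf_def prj_def)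
next
  case False
  define k where "k = kr m"
  define a where "a = (C \<bullet> k) / (k \<bullet> k)"
  define b where "b = (D \<bullet> k) / (k \<bullet> k)"
  have "tf m (C - prj m C) (D - prj m D) x \<bullet> w x = (a * cos (k \<bullet> x) + b * sin (k \<bullet> x)) * (k \<bullet> w x)" for x
    using False by (simp add: tf_def prj_def a_def b_def k_def inner_add_left algebra_simps)
  moreover have "integral torus_cell (\<lambda>x. (a * cos (k \<bullet> x) + b * sin (k \<bullet> x)) * (k \<bullet> w x)) = 0"
  proof (rule div_lemma[OF _ _ _ w, where \<phi> = "\<lambda>x. a * sin (k \<bullet> x) - b * cos (k \<bullet> x)"])
    show "((\<lambda>x. a * sin (k \<bullet> x) - b * cos (k \<bullet> x)) has_derivative (\<lambda>h. (a * cos (k \<bullet> x) + b * sin (k \<bullet> x)) * (k \<bullet> h))) (at x)" for x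
      by (auto intro!: derivative_eq_intros simp: algebra_simps)
    show "continuous_on UNIV (\<lambda>x. (a * cos (k \<bullet> x) + b * sin (k \<bullet> x)) * (k \<bullet> axis i 1))" for i
      by (intro continuous_intros)
    show "a * sin (k \<bullet> (x + (2 * pi) *\<^sub>R axis i 1)) - b * cos (k \<bullet> (x + (2 * pi) *\<^sub>R axis i 1)) =
          a * sin (k \<bullet> x) - b * cos (k \<bullet> x)" for x i
      by (simp add: k_def sin_shift cos_shift)
  qed
  ultimately show ?thesis by simp
qed

lemma orth_tp:
  assumes w: "solenoidal w"
  shows "integral torus_cell (\<lambda>x. (tp L x - tp (map prjT L) x) \<bullet> w x) = 0"
proof (induction L)
  case Nil then show ?case by simp
next
  case (Cons t L)
  obtain m C D where t: "t = (m,C,D)" by (cases t) auto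
  note wp = sol_parts[OF w]
  have eq: "(\<lambda>x. (tp (t#L) x - tp (map prjT (t#L)) x) \<bullet> w x)
     = (\<lambda>x. tf m (C - prj m C) (D - prj m D) x \<bullet> w x + (tp L x - tp (map prjT L) x) \<bullet> w x)"
    by (rule ext) (simp add: t prjT_def tf_diff[symmetric] inner_add_left algebra_simps)
  have i1: "(\<lambda>x. tf m (C - prj m C) (D - prj m D) x \<bullet> w x) integrable_on torus_cell"
    by (intro integrable_cell continuous_intros tf_cont wp(6))
  have i2: "(\<lambda>x. (tp L x - tp (map prjT L) x) \<bullet> w x) integrable_on torus_cell"
    by (intro integrable_cell continuous_intros tp_continuous wp(6))
  show ?case unfolding eq integral_add[OF i1 i2] orth_term[OF w] Cons.IH by simp
qed



lemma per_nat:
  assumes per: "\<And>x. f (x + (2*pi) *\<^sub>R axis i 1) = f x"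
  shows "f (x + (2*pi * real n) *\<^sub>R axis i 1) = f x"
proof (induction n)
  case 0 then show ?case by simp
next
  case (Suc n)
  have "x + (2*pi * real (Suc n)) *\<^sub>R axis i 1 = (x + (2*pi * real n) *\<^sub>R axis i 1) + (2*pi) *\<^sub>R axis i 1"
    by (simp add: algebra_simps)
  then show ?case using per[of "x + (2*pi * real n) *\<^sub>R axis i 1"] Suc.IH by (simp only:)
qed

lemma per_int:
  assumes per: "\<And>x. f (x + (2*pi) *\<^sub>R axis i 1) = f x"
  shows "f (x + (2*pi * real_of_int n) *\<^sub>R axis i 1) = f x"
proof (cases "n \<ge> 0")
  case True
  then obtain k where "n = int k" by (metis nonneg_int_cases)
  then show ?thesis using per_nat[of f i, OF per] by simp
next
  case False
  then obtain k where k: "n = - int k" by (metis le_less linear neg_int_cases)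
  have "f ((x + (2*pi * real_of_int n) *\<^sub>R axis i 1) + (2*pi * real k) *\<^sub>R axis i 1) = f (x + (2*pi * real_of_int n) *\<^sub>R axis i 1)"
    by (rule per_nat[of f i, OF per])
  moreover have "(x + (2*pi * real_of_int n) *\<^sub>R axis i 1) + (2*pi * real k) *\<^sub>R axis i 1 = x"
    by (simp add: k algebra_simps)
  ultimately show ?thesis by simp
qed

lemma per_reduce:
  assumes per: "\<And>x i. f (x + (2*pi) *\<^sub>R axis i 1) = f x"
  shows "\<exists>y\<in>torus_cell. f x = f y"
proof -
  define n where "n i = \<lfloor>x $ i / (2*pi)\<rfloor>" for i
  define y where "y = (\<chi> i. x $ i - 2*pi * real_of_int (n i))"
  have xy: "x = ((y + (2*pi * real_of_int (n 1)) *\<^sub>R axis 1 1) + (2*pi * real_of_int (n 2)) *\<^sub>R axis 2 1)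
      + (2*pi * real_of_int (n 3)) *\<^sub>R axis 3 1"
    by (simp add: vec_eq_iff forall_3 y_def axis_comp)
  have pi: "f (z + (2*pi * real_of_int k) *\<^sub>R axis j 1) = f z" for z j k
    by (intro per_int per)
  have "f x = f y" unfolding xy by (simp only: pi)
  moreover have "y \<in> torus_cell"
  proof -
    have "0 \<le> y $ i \<and> y $ i \<le> 2*pi" for i
    proof -
      have a: "real_of_int (n i) \<le> x $ i / (2*pi)" "x $ i / (2*pi) < real_of_int (n i) + 1"
        unfolding n_def by linarith+
      have "2*pi * real_of_int (n i) \<le> x $ i" using a(1) pi_gt_zero by (simp add: field_simps)
      moreover have "x $ i < 2*pi * real_of_int (n i) + 2*pi" using a(2) pi_gt_zero by (simp add: field_simps)
      ultimately show ?thesis by (simp add: y_def)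
    qed
    then show ?thesis by (simp add: cell_eq mem_box_cart)
  qed
  ultimately show ?thesis by blast
qed

lemma sol_diff:
  assumes "solenoidal v1" "solenoidal v2"
  shows "solenoidal (\<lambda>x. v1 x - v2 x)"
proof -
  note p1 = sol_parts[OF assms(1)] and p2 = sol_parts[OF assms(2)]
  have fd: "frechet_derivative (\<lambda>x. v1 x - v2 x) (at x) = (\<lambda>h. frechet_derivative v1 (at x) h - frechet_derivative v2 (at x) h)" for x
    by (rule frechet_derivative_at[symmetric], rule has_derivative_diff[OF p1(2) p2(2)])
  have dif: "(\<lambda>x. v1 x - v2 x) differentiable at x" for x
    using has_derivative_diff[OF p1(2) p2(2)] differentiable_def by blast
  have div: "divergence (\<lambda>x. v1 x - v2 x) x = 0" for x
    using p1(4)[of x] p2(4)[of x] by (simp add: divergence_def fd sum_subtractf)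
  have int: "integral torus_cell (\<lambda>x. v1 x - v2 x) = 0"
    using p1(5) p2(5) integral_diff[OF integrable_cell[OF p1(6)] integrable_cell[OF p2(6)]] by simp
  show ?thesis unfolding solenoidal_def periodic_field_def
    using p1(1) p2(1) dif div int fd p1(3) p2(3) by (auto intro!: continuous_intros)
qed

lemma leray_unique:
  assumes cu: "continuous_on UNIV u" and s1: "solenoidal v1" and s2: "solenoidal v2"
    and o1: "\<forall>w. solenoidal w \<longrightarrow> integral torus_cell (\<lambda>x. (u x - v1 x) \<bullet> w x) = 0"
    and o2: "\<forall>w. solenoidal w \<longrightarrow> integral torus_cell (\<lambda>x. (u x - v2 x) \<bullet> w x) = 0"
  shows "v1 = v2"
proof -
  define d where "d x = v1 x - v2 x" for x
  have sd: "solenoidal d" unfolding d_def by (rule sol_diff[OF s1 s2])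
  note pd = sol_parts[OF sd] and p1 = sol_parts[OF s1] and p2 = sol_parts[OF s2]
  have i1: "(\<lambda>x. (u x - v2 x) \<bullet> d x) integrable_on torus_cell"
    by (intro integrable_cell continuous_intros cu p2(6) pd(6))
  have i2: "(\<lambda>x. (u x - v1 x) \<bullet> d x) integrable_on torus_cell"
    by (intro integrable_cell continuous_intros cu p1(6) pd(6))
  have "integral torus_cell (\<lambda>x. d x \<bullet> d x) = integral torus_cell (\<lambda>x. (u x - v2 x) \<bullet> d x - (u x - v1 x) \<bullet> d x)"
    by (rule arg_cong[where f="integral torus_cell"], rule ext) (simp add: d_def algebra_simps inner_diff_left)
  also have "\<dots> = 0" using integral_diff[OF i1 i2] o1 o2 sd by simp
  finally have z: "integral torus_cell (\<lambda>x. d x \<bullet> d x) = 0" .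
  have cdd: "continuous_on UNIV (\<lambda>x. d x \<bullet> d x)" by (intro continuous_intros pd(6))
  have hz: "((\<lambda>x. d x \<bullet> d x) has_integral 0) torus_cell"
    using z integrable_cell[OF cdd] by (metis has_integral_integrable_integral)
  have box: "box 0 (\<chi> i. 2 * pi) \<noteq> ({}::(real^3) set)"
    by (simp add: box_ne_empty inner_axis Basis_vec_def)
  have cell0: "d y = 0" if "y \<in> torus_cell" for y
  proof -
    have c: "continuous_on (cbox 0 (\<chi> i. 2 * pi)) (\<lambda>x. d x \<bullet> d x)"
      using cdd continuous_on_subset subset_UNIV by blast
    have h: "((\<lambda>x. d x \<bullet> d x) has_integral 0) (cbox 0 (\<chi> i. 2 * pi))" using hz by (simp add: cell_eq)
    have y: "y \<in> cbox 0 (\<chi> i. 2 * pi)" using that by (simp add: cell_eq)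
    have "d y \<bullet> d y = 0"
      by (rule has_integral_0_cbox_imp_0[OF c _ h box y]) simp
    then show ?thesis by simp
  qed
  have "d x = 0" for x
    using per_reduce[of d x] pd(1) cell0 by metis
  then show ?thesis by (auto simp: d_def fun_eq_iff)
qed

lemma leray_tp: "leray (tp L) = tp (map prjT L)"
  unfolding leray_def
proof (rule the_equality)
  show "solenoidal (tp (map prjT L)) \<and>
    (\<forall>w. solenoidal w \<longrightarrow> integral torus_cell (\<lambda>x. (tp L x - tp (map prjT L) x) \<bullet> w x) = 0)"
    using sol_tp[of "map prjT L"] okT_prjT orth_tp by auto
  show "v = tp (map prjT L)" if "solenoidal v \<and>
      (\<forall>w. solenoidal w \<longrightarrow> integral torus_cell (\<lambda>x. (tp L x - v x) \<bullet> w x) = 0)" for v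
    using leray_unique[OF tp_continuous, of v "tp (map prjT L)"] that
      sol_tp[of "map prjT L"] okT_prjT orth_tp by auto
qed

theorem Bop_tp: "Bop (tp L1) (tp L2) = tp (map prjT (bopRaw L1 L2))"
proof -
  have "(\<lambda>x. dir_deriv (tp L1) (tp L2) x + dir_deriv (tp L2) (tp L1) x) = tp (bopRaw L1 L2)"
    by (rule ext) (rule E_lemma)
  then show ?thesis by (simp add: Bop_def leray_tp)
qed



lemma fspanI: "finite T \<Longrightarrow> T \<subseteq> S \<Longrightarrow> f = (\<lambda>x. \<Sum>e\<in>T. c e *\<^sub>R e x) \<Longrightarrow> f \<in> fspan S"
  unfolding fspan_def by blast

lemma fspan_0: "(\<lambda>x. 0) \<in> fspan S"
  unfolding fspan_def by (rule CollectI, rule exI[of _ "{}"]) auto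

lemma fspan_base: "f \<in> S \<Longrightarrow> f \<in> fspan S"
  unfolding fspan_def by (rule CollectI, rule exI[of _ "{f}"], rule exI[of _ "\<lambda>_. 1"]) auto

lemma fspan_scale: "f \<in> fspan S \<Longrightarrow> (\<lambda>x. a *\<^sub>R f x) \<in> fspan S"
proof -
  assume "f \<in> fspan S"
  then obtain T c where T: "finite T" "T \<subseteq> S" and f: "f = (\<lambda>x. \<Sum>e\<in>T. c e *\<^sub>R e x)"
    unfolding fspan_def by blast
  have "(\<lambda>x. a *\<^sub>R f x) = (\<lambda>x. \<Sum>e\<in>T. (a * c e) *\<^sub>R e x)"
    by (simp add: f scaleR_sum_right)
  then show ?thesis by (rule fspanI[OF T])
qed

lemma fspan_add: "f \<in> fspan S \<Longrightarrow> g \<in> fspan S \<Longrightarrow> (\<lambda>x. f x + g x) \<in> fspan S"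
proof -
  assume "f \<in> fspan S" "g \<in> fspan S"
  then obtain T1 c1 T2 c2 where T: "finite T1" "T1 \<subseteq> S" "finite T2" "T2 \<subseteq> S"
    and f: "f = (\<lambda>x. \<Sum>e\<in>T1. c1 e *\<^sub>R e x)" and g: "g = (\<lambda>x. \<Sum>e\<in>T2. c2 e *\<^sub>R e x)"
    unfolding fspan_def by blast
  define c where "c e = (if e \<in> T1 then c1 e else 0) + (if e \<in> T2 then c2 e else 0)" for e
  have "(\<Sum>e\<in>T1 \<union> T2. c e *\<^sub>R e x) = (\<Sum>e\<in>T1 \<union> T2. (if e \<in> T1 then c1 e else 0) *\<^sub>R e x)
       + (\<Sum>e\<in>T1 \<union> T2. (if e \<in> T2 then c2 e else 0) *\<^sub>R e x)" for x
    by (simp add: c_def scaleR_add_left sum.distrib)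
  also have "\<dots> x = (\<Sum>e\<in>T1. c1 e *\<^sub>R e x) + (\<Sum>e\<in>T2. c2 e *\<^sub>R e x)" for x
  proof -
    have a: "(\<Sum>e\<in>T1 \<union> T2. (if e \<in> T1 then c1 e else 0) *\<^sub>R e x) = (\<Sum>e\<in>T1. c1 e *\<^sub>R e x)"
      by (rule sum.mono_neutral_cong_right) (use T in auto)
    have b: "(\<Sum>e\<in>T1 \<union> T2. (if e \<in> T2 then c2 e else 0) *\<^sub>R e x) = (\<Sum>e\<in>T2. c2 e *\<^sub>R e x)"
      by (rule sum.mono_neutral_cong_right) (use T in auto)
    show ?thesis using a b by simp
  qed
  finally have "(\<lambda>x. f x + g x) = (\<lambda>x. \<Sum>e\<in>T1 \<union> T2. c e *\<^sub>R e x)" by (simp add: f g)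
  then show ?thesis by (rule fspanI[rotated 2]) (use T in auto)
qed

lemma fspan_sub_lemma: "finite U \<Longrightarrow> U \<subseteq> S \<Longrightarrow> S \<subseteq> fspan T \<Longrightarrow> (\<lambda>x. \<Sum>e\<in>U. c e *\<^sub>R e x) \<in> fspan T"
proof (induction U rule: finite_induct)
  case empty then show ?case using fspan_0 by simp
next
  case (insert a U)
  have "a \<in> fspan T" using insert by blast
  then have "(\<lambda>x. c a *\<^sub>R a x) \<in> fspan T" by (rule fspan_scale)
  moreover have "(\<lambda>x. \<Sum>e\<in>U. c e *\<^sub>R e x) \<in> fspan T" using insert by blast
  ultimately have "(\<lambda>x. c a *\<^sub>R a x + (\<Sum>e\<in>U. c e *\<^sub>R e x)) \<in> fspan T" by (rule fspan_add)
  then show ?case using insert by simp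
qed

lemma fspan_mono_span: "S \<subseteq> fspan T \<Longrightarrow> fspan S \<subseteq> fspan T"
  unfolding fspan_def[of S] using fspan_sub_lemma by blast

section \<open>Fk and Bop on single modes\<close>

lemma Fk_nz: "k \<noteq> 0 \<Longrightarrow> Fk k = {tf k A B | A B. A \<bullet> kr k = 0 \<and> B \<bullet> kr k = 0}"
  by (simp add: Fk_def tf_def)

lemma tf_in_Fk: "k \<noteq> 0 \<Longrightarrow> A \<bullet> kr k = 0 \<Longrightarrow> B \<bullet> kr k = 0 \<Longrightarrow> tf k A B \<in> Fk k"
  by (auto simp: Fk_nz)

lemma tp_single: "tp [(m,C,D)] = tf m C D" by (rule ext) simp

lemma prj_lin: "prj m (a + b) = prj m a + prj m b" "prj m (a - b) = prj m a - prj m b"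
  "prj m (c *\<^sub>R a) = c *\<^sub>R prj m a" "prj m (- a) = - prj m a" "prj m 0 = 0"
  by (simp_all add: prj_def inner_add_left inner_diff_left algebra_simps add_divide_distrib diff_divide_distrib)

lemma prj_id: "m \<noteq> 0 \<Longrightarrow> v \<bullet> kr m = 0 \<Longrightarrow> prj m v = v"
  by (simp add: prj_def)

lemma tf_prj_in_Fk: "tf m (prj m X) (prj m Y) \<in> Fk m"
proof (cases "m = 0")
  case True then show ?thesis by (simp add: prj_def Fk_def)
next
  case False then show ?thesis by (intro tf_in_Fk prj_orth)
qed

lemma Bop_tf: "Bop (tf j A B) (tf k C D) = (\<lambda>x. tp (map prjT (ddT (j,A,B) (k,C,D))) x)"
  using Bop_tp[of "[(j,A,B)]" "[(k,C,D)]"] by (simp add: tp_single bopRaw_def)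

lemma Bop_tf_expl: "Bop (tf j A B) (tf k C D) = (\<lambda>x.
   tf (j+k) (prj (j+k) ((1/2) *\<^sub>R ((A \<bullet> kr k) *\<^sub>R D + (B \<bullet> kr k) *\<^sub>R C + (C \<bullet> kr j) *\<^sub>R B + (D \<bullet> kr j) *\<^sub>R A)))
            (prj (j+k) ((1/2) *\<^sub>R (- (A \<bullet> kr k) *\<^sub>R C + (B \<bullet> kr k) *\<^sub>R D - (C \<bullet> kr j) *\<^sub>R A + (D \<bullet> kr j) *\<^sub>R B))) x
 + tf (j-k) (prj (j-k) ((1/2) *\<^sub>R ((A \<bullet> kr k) *\<^sub>R D - (B \<bullet> kr k) *\<^sub>R C + (C \<bullet> kr j) *\<^sub>R B - (D \<bullet> kr j) *\<^sub>R A)))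
            (prj (j-k) ((1/2) *\<^sub>R ((A \<bullet> kr k) *\<^sub>R C + (B \<bullet> kr k) *\<^sub>R D - (C \<bullet> kr j) *\<^sub>R A - (D \<bullet> kr j) *\<^sub>R B))) x)"
  unfolding Bop_tf by (rule ext) (simp add: ddT_def prjT_def)

lemma part1: "k \<noteq> 0 \<Longrightarrow> e \<in> Fk k \<Longrightarrow> e' \<in> Fk k \<Longrightarrow> Bop e e' = (\<lambda>x. 0)"
  by (auto simp: Fk_nz Bop_tf_expl prj_lin inner_commute)

lemma Bop_in: "j \<noteq> 0 \<Longrightarrow> k \<noteq> 0 \<Longrightarrow> e \<in> Fk j \<Longrightarrow> e' \<in> Fk k \<Longrightarrow> Bop e e' \<in> fspan (Fk (j - k) \<union> Fk (j + k))"
proof -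
  assume j: "j \<noteq> 0" and k: "k \<noteq> 0" and e: "e \<in> Fk j" and e': "e' \<in> Fk k"
  obtain A B where eAB: "e = tf j A B" using e j by (auto simp: Fk_nz)
  obtain C D where eCD: "e' = tf k C D" using e' k by (auto simp: Fk_nz)
  show ?thesis unfolding eAB eCD Bop_tf_expl
    by (intro fspan_add fspan_base) (auto intro: tf_prj_in_Fk)
qed

lemma part2a: "j \<noteq> 0 \<Longrightarrow> k \<noteq> 0 \<Longrightarrow>
   fspan {Bop e e' | e e'. e \<in> Fk j \<and> e' \<in> Fk k} \<subseteq> fspan (Fk (j - k) \<union> Fk (j + k))"
  by (rule fspan_mono_span) (use Bop_in in blast)



definition Gv :: "int^3 \<Rightarrow> int^3 \<Rightarrow> real^3 \<Rightarrow> real^3 \<Rightarrow> real^3" where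
  "Gv j k a b = (a \<bullet> kr k) *\<^sub>R b + (b \<bullet> kr j) *\<^sub>R a"

lemma GL1: "(\<lambda>x. Bop (tf j a 0) (tf k 0 b) x + Bop (tf j 0 a) (tf k b 0) x) = tf (j+k) (prj (j+k) (Gv j k a b)) 0"
  apply (rule ext)
  apply (simp only: Bop_tf_expl)
  apply (simp add: prj_lin Gv_def tf_def)
  apply (simp add: vec_eq_iff field_simps)
  done

lemma GL2: "(\<lambda>x. Bop (tf j 0 a) (tf k 0 b) x + Bop (tf j (-a) 0) (tf k b 0) x) = tf (j+k) 0 (prj (j+k) (Gv j k a b))"
  apply (rule ext)
  apply (simp only: Bop_tf_expl)
  apply (simp add: prj_lin Gv_def tf_def)
  apply (simp add: vec_eq_iff field_simps)
  done



lemma basis3: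
  fixes m u1 u2 V :: "real^3"
  assumes nz: "m \<noteq> 0" "u1 \<noteq> 0" "u2 \<noteq> 0"
    and o: "m \<bullet> u1 = 0" "m \<bullet> u2 = 0" "u1 \<bullet> u2 = 0" and V: "V \<bullet> m = 0"
  shows "V = (V \<bullet> u1 / (u1 \<bullet> u1)) *\<^sub>R u1 + (V \<bullet> u2 / (u2 \<bullet> u2)) *\<^sub>R u2"
proof -
  define R where "R = V - ((V \<bullet> u1 / (u1 \<bullet> u1)) *\<^sub>R u1 + (V \<bullet> u2 / (u2 \<bullet> u2)) *\<^sub>R u2)"
  define S where "S = {m, u1, u2}"
  have d: "m \<noteq> u1" "m \<noteq> u2" "u1 \<noteq> u2" using nz o by auto
  have po: "pairwise orthogonal S"
    using o by (auto simp: S_def pairwise_def orthogonal_def inner_commute)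
  have ind: "independent S" using pairwise_orthogonal_independent[OF po] nz by (auto simp: S_def)
  have cS: "card S = 3" using d by (simp add: S_def)
  have "UNIV \<subseteq> span S"
    by (rule card_ge_dim_independent[OF subset_UNIV ind]) (simp add: cS)
  then have Rs: "R \<in> span S" by blast
  have "orthogonal R y" if "y \<in> S" for y
  proof -
    have "R \<bullet> m = 0" using V o by (simp add: R_def inner_diff_left inner_add_left inner_diff_right inner_add_right inner_commute)
    moreover have "R \<bullet> u1 = 0" using nz o by (simp add: R_def inner_diff_left inner_add_left inner_diff_right inner_add_right inner_commute)
    moreover have "R \<bullet> u2 = 0" using nz o by (simp add: R_def inner_diff_left inner_add_left inner_diff_right inner_add_right inner_commute)
    ultimately show ?thesis using that by (auto simp: S_def orthogonal_def)
  qed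
  then have "orthogonal R R" using orthogonal_to_span[OF Rs] by blast
  then have "R = 0" by (simp add: orthogonal_def)
  then show ?thesis by (simp add: R_def)
qed

lemma bac_cab: "cross3 x (cross3 y z) = (x \<bullet> z) *\<^sub>R y - (x \<bullet> y) *\<^sub>R z"
  unfolding vec_eq_iff forall_3 by (simp add: cross3_simps)



lemma Gv_in:
  assumes j: "j \<noteq> 0" and k: "k \<noteq> 0" and a: "a \<bullet> kr j = 0" and b: "b \<bullet> kr k = 0"
  shows "tf (j+k) (prj (j+k) (Gv j k a b)) 0 \<in> fspan {Bop e e' | e e'. e \<in> Fk j \<and> e' \<in> Fk k}"
    and "tf (j+k) 0 (prj (j+k) (Gv j k a b)) \<in> fspan {Bop e e' | e e'. e \<in> Fk j \<and> e' \<in> Fk k}"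
proof -
  have f: "tf j a 0 \<in> Fk j" "tf j 0 a \<in> Fk j" "tf j (-a) 0 \<in> Fk j" "tf k 0 b \<in> Fk k" "tf k b 0 \<in> Fk k"
    using j k a b by (auto intro!: tf_in_Fk)
  show "tf (j+k) (prj (j+k) (Gv j k a b)) 0 \<in> fspan {Bop e e' | e e'. e \<in> Fk j \<and> e' \<in> Fk k}"
    unfolding GL1[symmetric] by (intro fspan_add fspan_base) (use f in blast)+
  show "tf (j+k) 0 (prj (j+k) (Gv j k a b)) \<in> fspan {Bop e e' | e e'. e \<in> Fk j \<and> e' \<in> Fk k}"
    unfolding GL2[symmetric] by (intro fspan_add fspan_base) (use f in blast)+
qed

lemma plus_part:
  fixes j k :: "int^3"
  assumes j: "j \<noteq> 0" and k: "k \<noteq> 0"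
    and ind: "\<forall>a b::real. a *\<^sub>R kr j + b *\<^sub>R kr k = 0 \<longrightarrow> a = 0 \<and> b = 0"
    and nrm: "norm (kr j) \<noteq> norm (kr k)"
  shows "Fk (j+k) \<subseteq> fspan {Bop e e' | e e'. e \<in> Fk j \<and> e' \<in> Fk k}"
proof
  define J where "J = kr j"
  define K where "K = kr k"
  define m where "m = j + k"
  define M where "M = kr m"
  have MJK: "M = J + K" by (simp add: M_def J_def K_def m_def kr_add)
  have mz: "m \<noteq> 0"
  proof
    assume "m = 0"
    then have "1 *\<^sub>R J + 1 *\<^sub>R K = 0" using MJK by (simp add: M_def)
    then show False using ind[rule_format, of 1 1] by (auto simp: J_def K_def)
  qed
  have Mz: "M \<noteq> 0" using mz by (simp add: M_def)
  define n where "n = cross3 J K"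
  have nJ: "n \<bullet> J = 0" and nK: "n \<bullet> K = 0"
    unfolding n_def using dot_cross_self by (auto simp: inner_commute)
  have nM: "n \<bullet> M = 0" using nJ nK by (simp add: MJK inner_add_right)
  have Jz: "J \<noteq> 0" "K \<noteq> 0" using j k by (simp_all add: J_def K_def)
  have nz: "n \<noteq> 0"
  proof
    assume "n = 0"
    then have "collinear {0, J, K}" by (simp add: n_def cross_eq_0)
    then obtain c where "K = c *\<^sub>R J" using Jz by (auto simp: collinear_lemma)
    then have "c *\<^sub>R J + (-1) *\<^sub>R K = 0" by simp
    then show False using ind[rule_format, of c "-1"] by (auto simp: J_def K_def)
  qed
  define N where "N = n \<bullet> n"
  have Nz: "N \<noteq> 0" using nz by (simp add: N_def)
  have NN: "N = (J \<bullet> J) * (K \<bullet> K) - (J \<bullet> K) * (J \<bullet> K)"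
    unfolding N_def n_def dot_cross by (simp add: inner_commute)
  have Kn: "cross3 K n = (K \<bullet> K) *\<^sub>R J - (K \<bullet> J) *\<^sub>R K" unfolding n_def bac_cab ..
  have Jn: "cross3 J n = (J \<bullet> K) *\<^sub>R J - (J \<bullet> J) *\<^sub>R K" unfolding n_def bac_cab ..
  have KnJ: "cross3 K n \<bullet> J = N" unfolding Kn NN by (simp add: inner_diff_left inner_diff_right inner_commute)
  have JnK: "cross3 J n \<bullet> K = - N" unfolding Jn NN by (simp add: inner_diff_left inner_diff_right inner_commute)
  define u1 where "u1 = prj m (Gv j k n (cross3 K n))"
  define u2 where "u2 = prj m (Gv j k (cross3 J n) (cross3 K n))"
  have g1: "Gv j k n (cross3 K n) = N *\<^sub>R n"
    by (simp add: Gv_def J_def[symmetric] K_def[symmetric] nK KnJ)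
  have u1: "u1 = N *\<^sub>R n" unfolding u1_def g1 using mz nM by (simp add: prj_id M_def)
  have g2: "Gv j k (cross3 J n) (cross3 K n) = (N * (J \<bullet> K - K \<bullet> K)) *\<^sub>R J + (N * (J \<bullet> K - J \<bullet> J)) *\<^sub>R K"
    unfolding Gv_def J_def[symmetric] K_def[symmetric] KnJ JnK unfolding Kn Jn
    by (simp add: algebra_simps inner_commute)
  have u1z: "u1 \<noteq> 0" using Nz nz by (simp add: u1)
  have Mu1: "M \<bullet> u1 = 0" using nM by (simp add: u1 inner_commute)
  have Mu2: "M \<bullet> u2 = 0" using prj_orth[of m] by (simp add: u2_def M_def inner_commute)
  have u2e: "u2 = Gv j k (cross3 J n) (cross3 K n) - ((Gv j k (cross3 J n) (cross3 K n) \<bullet> M) / (M \<bullet> M)) *\<^sub>R M"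
    using mz by (simp add: u2_def prj_def M_def)
  have u12: "u1 \<bullet> u2 = 0"
    unfolding u1 u2e g2 using nJ nK nM by (simp add: inner_diff_right inner_add_right)
  have u2z: "u2 \<noteq> 0"
  proof
    assume "u2 = 0"
    define t where "t = (Gv j k (cross3 J n) (cross3 K n) \<bullet> M) / (M \<bullet> M)"
    have "Gv j k (cross3 J n) (cross3 K n) = t *\<^sub>R M"
      using \<open>u2 = 0\<close> u2e unfolding t_def by (metis eq_iff_diff_eq_0)
    then have h: "(N * (J \<bullet> K - K \<bullet> K)) *\<^sub>R J + (N * (J \<bullet> K - J \<bullet> J)) *\<^sub>R K = t *\<^sub>R (J + K)"
      unfolding g2 MJK .
    have "(N * (J \<bullet> K - K \<bullet> K) - t) *\<^sub>R J + (N * (J \<bullet> K - J \<bullet> J) - t) *\<^sub>R K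
        = ((N * (J \<bullet> K - K \<bullet> K)) *\<^sub>R J + (N * (J \<bullet> K - J \<bullet> J)) *\<^sub>R K) - t *\<^sub>R (J + K)"
      by (simp add: algebra_simps)
    then have "(N * (J \<bullet> K - K \<bullet> K) - t) *\<^sub>R J + (N * (J \<bullet> K - J \<bullet> J) - t) *\<^sub>R K = 0"
      using h by simp
    then have "N * (J \<bullet> K - K \<bullet> K) - t = 0 \<and> N * (J \<bullet> K - J \<bullet> J) - t = 0"
      using ind[rule_format, of "N * (J \<bullet> K - K \<bullet> K) - t" "N * (J \<bullet> K - J \<bullet> J) - t"]
      by (simp only: J_def K_def)
    then have "N * (J \<bullet> K - K \<bullet> K) - t = 0" "N * (J \<bullet> K - J \<bullet> J) - t = 0" by auto
    then have "N * (K \<bullet> K) = N * (J \<bullet> J)" by (simp add: algebra_simps)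
    then have "K \<bullet> K = J \<bullet> J" using Nz by simp
    then have "norm J = norm K" by (simp add: norm_eq_sqrt_inner)
    then show False using nrm by (simp add: J_def K_def)
  qed
  fix e assume "e \<in> Fk (j+k)"
  then obtain V W where e: "e = tf m V W" and V: "V \<bullet> M = 0" and W: "W \<bullet> M = 0"
    using mz by (auto simp: Fk_nz m_def M_def)
  define S where "S = {Bop e e' | e e'. e \<in> Fk j \<and> e' \<in> Fk k}"
  have nJ': "n \<bullet> kr j = 0" and KnK: "cross3 K n \<bullet> kr k = 0" and JnJ: "cross3 J n \<bullet> kr j = 0"
    using nJ dot_cross_self by (auto simp: J_def K_def)
  have i1: "tf m u1 0 \<in> fspan S" "tf m 0 u1 \<in> fspan S"
    unfolding u1_def S_def m_def using Gv_in[OF j k nJ' KnK] by auto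
  have i2: "tf m u2 0 \<in> fspan S" "tf m 0 u2 \<in> fspan S"
    unfolding u2_def S_def m_def using Gv_in[OF j k JnJ KnK] by auto
  have Vb: "V = (V \<bullet> u1 / (u1 \<bullet> u1)) *\<^sub>R u1 + (V \<bullet> u2 / (u2 \<bullet> u2)) *\<^sub>R u2"
    by (rule basis3[OF Mz u1z u2z Mu1 Mu2 u12 V])
  have Wb: "W = (W \<bullet> u1 / (u1 \<bullet> u1)) *\<^sub>R u1 + (W \<bullet> u2 / (u2 \<bullet> u2)) *\<^sub>R u2"
    by (rule basis3[OF Mz u1z u2z Mu1 Mu2 u12 W])
  define \<alpha> where "\<alpha> = V \<bullet> u1 / (u1 \<bullet> u1)"
  define \<beta> where "\<beta> = V \<bullet> u2 / (u2 \<bullet> u2)"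
  define \<gamma> where "\<gamma> = W \<bullet> u1 / (u1 \<bullet> u1)"
  define \<delta> where "\<delta> = W \<bullet> u2 / (u2 \<bullet> u2)"
  have "tf m V W = (\<lambda>x. (\<alpha> *\<^sub>R tf m u1 0 x + \<beta> *\<^sub>R tf m u2 0 x) + (\<gamma> *\<^sub>R tf m 0 u1 x + \<delta> *\<^sub>R tf m 0 u2 x))"
    apply (subst Vb, subst Wb)
    by (rule ext) (simp add: tf_def \<alpha>_def \<beta>_def \<gamma>_def \<delta>_def algebra_simps)
  also have "\<dots> \<in> fspan S"
    by (intro fspan_add fspan_scale i1 i2)
  finally show "e \<in> fspan {Bop e e' | e e'. e \<in> Fk j \<and> e' \<in> Fk k}" using e S_def by simp
qed



lemma tf_neg: "tf (-k) A B = tf k A (-B)"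
  by (rule ext) (simp add: tf_def kr_uminus)

lemma Fk_neg: "Fk (-k) = Fk k"
proof (cases "k = 0")
  case True then show ?thesis by simp
next
  case False
  then have nk: "-k \<noteq> 0" by simp
  show ?thesis
  proof
    show "Fk (-k) \<subseteq> Fk k"
    proof
      fix e assume "e \<in> Fk (-k)"
      then obtain A B where "e = tf (-k) A B" "A \<bullet> kr (-k) = 0" "B \<bullet> kr (-k) = 0"
        using nk by (auto simp: Fk_nz)
      then show "e \<in> Fk k" using False by (auto simp: tf_neg kr_uminus intro!: tf_in_Fk)
    qed
    show "Fk k \<subseteq> Fk (-k)"
    proof
      fix e assume "e \<in> Fk k"
      then obtain A B where "e = tf k A B" "A \<bullet> kr k = 0" "B \<bullet> kr k = 0"
        using False by (auto simp: Fk_nz)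
      moreover have "tf k A B = tf (-k) A (-B)" by (simp add: tf_neg)
      ultimately show "e \<in> Fk (-k)" using nk by (auto simp: kr_uminus intro!: tf_in_Fk)
    qed
  qed
qed

lemma part2b:
  fixes j k :: "int^3"
  assumes j: "j \<noteq> 0" and k: "k \<noteq> 0"
    and ind: "\<forall>a b::real. a *\<^sub>R kr j + b *\<^sub>R kr k = 0 \<longrightarrow> a = 0 \<and> b = 0"
    and nrm: "norm (kr j) \<noteq> norm (kr k)"
  shows "fspan {Bop e e' | e e'. e \<in> Fk j \<and> e' \<in> Fk k} = fspan (Fk (j - k) \<union> Fk (j + k))"
proof
  show "fspan {Bop e e' | e e'. e \<in> Fk j \<and> e' \<in> Fk k} \<subseteq> fspan (Fk (j - k) \<union> Fk (j + k))"
    by (rule part2a[OF j k])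
  have ind': "\<forall>a b::real. a *\<^sub>R kr j + b *\<^sub>R kr (-k) = 0 \<longrightarrow> a = 0 \<and> b = 0"
  proof (intro allI impI)
    fix a b :: real assume "a *\<^sub>R kr j + b *\<^sub>R kr (-k) = 0"
    then have "a *\<^sub>R kr j + (-b) *\<^sub>R kr k = 0" by (simp add: kr_uminus)
    then show "a = 0 \<and> b = 0" using ind[rule_format, of a "-b"] by simp
  qed
  have nrm': "norm (kr j) \<noteq> norm (kr (-k))" using nrm by (simp add: kr_uminus)
  have "Fk (j + -k) \<subseteq> fspan {Bop e e' | e e'. e \<in> Fk j \<and> e' \<in> Fk (-k)}"
    by (rule plus_part[OF j _ ind' nrm']) (use k in simp)
  then have a: "Fk (j - k) \<subseteq> fspan {Bop e e' | e e'. e \<in> Fk j \<and> e' \<in> Fk k}"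
    by (simp add: Fk_neg)
  have b: "Fk (j + k) \<subseteq> fspan {Bop e e' | e e'. e \<in> Fk j \<and> e' \<in> Fk k}"
    by (rule plus_part[OF j k ind nrm])
  show "fspan (Fk (j - k) \<union> Fk (j + k)) \<subseteq> fspan {Bop e e' | e e'. e \<in> Fk j \<and> e' \<in> Fk k}"
    by (rule fspan_mono_span) (use a b in blast)
qed



lemma Bop_add1: "Bop (\<lambda>x. tp L1 x + tp L2 x) (tp L3) = (\<lambda>x. Bop (tp L1) (tp L3) x + Bop (tp L2) (tp L3) x)"
proof -
  have "(\<lambda>x. tp L1 x + tp L2 x) = tp (L1 @ L2)" by (rule ext) simp
  moreover have "bopRaw (L1 @ L2) L3 = bopRaw L1 L3 @ bopRaw L2 L3" by (simp add: bopRaw_def)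
  ultimately show ?thesis by (simp add: Bop_tp) (rule ext, simp)
qed

lemma Bop_tf_tp: "Bop (tf j A B) (tf k C D) = tp (map prjT (ddT (j,A,B) (k,C,D)))"
  using Bop_tf by metis

lemma Bop_add_tf:
  "Bop (\<lambda>x. Bop (tf j1 A1 B1) (tf k1 C1 D1) x + Bop (tf j2 A2 B2) (tf k2 C2 D2) x) (tf k C D)
   = (\<lambda>x. Bop (Bop (tf j1 A1 B1) (tf k1 C1 D1)) (tf k C D) x + Bop (Bop (tf j2 A2 B2) (tf k2 C2 D2)) (tf k C D) x)"
  unfolding Bop_tf_tp tp_single[symmetric, of k C D] by (rule Bop_add1)

definition "e1 = (vector [1,0,0] :: int^3)"
definition "e2 = (vector [0,1,0] :: int^3)"
definition "e3 = (vector [0,0,1] :: int^3)"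
definition "a1 = (vector [1,0,0] :: real^3)"
definition "a2 = (vector [0,1,0] :: real^3)"
definition "a3 = (vector [0,0,1] :: real^3)"

lemma kr_vector: "kr (vector [a,b,c]) = vector [real_of_int a, real_of_int b, real_of_int c]"
  by (simp add: kr_def vec_eq_iff forall_3)

lemma vec3_eq: "(x::'a::zero^3) = y \<longleftrightarrow> x$1 = y$1 \<and> x$2 = y$2 \<and> x$3 = y$3"
  by (simp add: vec_eq_iff forall_3)

lemma inner3: "(x::real^3) \<bullet> y = x$1 * y$1 + x$2 * y$2 + x$3 * y$3"
  by (simp add: inner_vec_def sum_3)

lemmas vsimps = e1_def e2_def e3_def a1_def a2_def a3_def kr_vector vec3_eq inner3

definition "pp = e1 + e2"
definition "qq = pp + e3"

lemma pp_eq: "pp = vector [1,1,0]" by (simp add: pp_def vsimps)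
lemma qq_eq: "qq = vector [1,1,1]" by (simp add: qq_def pp_def vsimps)

lemma nz: "e1 \<noteq> 0" "e2 \<noteq> 0" "e3 \<noteq> 0" "pp \<noteq> 0" "qq \<noteq> 0"
  by (simp_all add: pp_eq qq_eq vsimps)

definition "U = Fk e1 \<union> Fk e2 \<union> Fk e3"
definition "S3 = {Bop (Bop e e') e'' | e e' e''. e \<in> U \<and> e' \<in> U \<and> e'' \<in> U}"

lemma memU: "tf e1 a3 0 \<in> U" "tf e1 0 a3 \<in> U" "tf e1 (-a3) 0 \<in> U" "tf e1 0 (-a3) \<in> U"
  "tf e2 0 a1 \<in> U" "tf e2 a1 0 \<in> U"
  "tf e3 0 a1 \<in> U" "tf e3 a1 0 \<in> U" "tf e3 0 a2 \<in> U" "tf e3 a2 0 \<in> U"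
  unfolding U_def by (intro UnI1 UnI2 tf_in_Fk nz; simp add: vsimps)+

lemma st1: "tf pp a3 0 = (\<lambda>x. Bop (tf e1 a3 0) (tf e2 0 a1) x + Bop (tf e1 0 a3) (tf e2 a1 0) x)"
  "tf pp 0 a3 = (\<lambda>x. Bop (tf e1 0 a3) (tf e2 0 a1) x + Bop (tf e1 (-a3) 0) (tf e2 a1 0) x)"
  "tf pp (-a3) 0 = (\<lambda>x. Bop (tf e1 (-a3) 0) (tf e2 0 a1) x + Bop (tf e1 0 (-a3)) (tf e2 a1 0) x)"
proof -
  have g: "Gv e1 e2 a3 a1 = a3" "Gv e1 e2 (-a3) a1 = -a3" by (simp_all add: Gv_def vsimps)
  have p: "prj pp a3 = a3" "prj pp (-a3) = -a3" using nz by (simp_all add: prj_id pp_eq vsimps)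
  show "tf pp a3 0 = (\<lambda>x. Bop (tf e1 a3 0) (tf e2 0 a1) x + Bop (tf e1 0 a3) (tf e2 a1 0) x)"
    using GL1[of e1 a3 e2 a1] g p by (simp add: pp_def[symmetric])
  show "tf pp 0 a3 = (\<lambda>x. Bop (tf e1 0 a3) (tf e2 0 a1) x + Bop (tf e1 (-a3) 0) (tf e2 a1 0) x)"
    using GL2[of e1 a3 e2 a1] g p by (simp add: pp_def[symmetric])
  show "tf pp (-a3) 0 = (\<lambda>x. Bop (tf e1 (-a3) 0) (tf e2 0 a1) x + Bop (tf e1 0 (-a3)) (tf e2 a1 0) x)"
    using GL1[of e1 "-a3" e2 a1] g p by (simp add: pp_def[symmetric])
qed

lemma st2:
  assumes c: "c = a1 \<or> c = a2"
  shows "tf qq (prj qq (Gv pp e3 a3 c)) 0 \<in> fspan S3" "tf qq 0 (prj qq (Gv pp e3 a3 c)) \<in> fspan S3"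
proof -
  have m: "tf e3 0 c \<in> U" "tf e3 c 0 \<in> U" using c memU by auto
  show "tf qq (prj qq (Gv pp e3 a3 c)) 0 \<in> fspan S3"
    unfolding qq_def GL1[symmetric] st1 Bop_add_tf
    by (intro fspan_add fspan_base) (unfold S3_def; use memU m in blast)+
  show "tf qq 0 (prj qq (Gv pp e3 a3 c)) \<in> fspan S3"
    unfolding qq_def GL2[symmetric] st1 Bop_add_tf
    by (intro fspan_add fspan_base) (unfold S3_def; use memU m in blast)+
qed

lemma v12: "prj qq (Gv pp e3 a3 a1) = vector [1/3, -2/3, 1/3]"
  "prj qq (Gv pp e3 a3 a2) = vector [-2/3, 1/3, 1/3]"
  using nz by (simp_all add: prj_def Gv_def qq_eq pp_eq vsimps)

lemma part3_main: "Fk qq \<subseteq> fspan S3"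
proof
  fix e assume "e \<in> Fk qq"
  then obtain V W where e: "e = tf qq V W" and V: "V \<bullet> kr qq = 0" and W: "W \<bullet> kr qq = 0"
    using nz by (auto simp: Fk_nz)
  define v1 where "v1 = prj qq (Gv pp e3 a3 a1)"
  define v2 where "v2 = prj qq (Gv pp e3 a3 a2)"
  have i: "tf qq v1 0 \<in> fspan S3" "tf qq 0 v1 \<in> fspan S3" "tf qq v2 0 \<in> fspan S3" "tf qq 0 v2 \<in> fspan S3"
    unfolding v1_def v2_def using st2 by auto
  have Ve: "V = (2 * V$3 + V$1) *\<^sub>R v1 + (V$3 - V$1) *\<^sub>R v2"
    using V unfolding v1_def v2_def v12 by (simp add: qq_eq vsimps field_simps)
  have We: "W = (2 * W$3 + W$1) *\<^sub>R v1 + (W$3 - W$1) *\<^sub>R v2"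
    using W unfolding v1_def v2_def v12 by (simp add: qq_eq vsimps field_simps)
  have "tf qq V W = (\<lambda>x. ((2 * V$3 + V$1) *\<^sub>R tf qq v1 0 x + (V$3 - V$1) *\<^sub>R tf qq v2 0 x)
       + ((2 * W$3 + W$1) *\<^sub>R tf qq 0 v1 x + (W$3 - W$1) *\<^sub>R tf qq 0 v2 x))"
    apply (subst Ve, subst We)
    by (rule ext) (simp add: tf_def algebra_simps)
  also have "\<dots> \<in> fspan S3" by (intro fspan_add fspan_scale i)
  finally show "e \<in> fspan S3" using e by simp
qed



theorem lemma5p21:
  shows "((\<forall>k::int^3. k \<noteq> 0 \<longrightarrow> (\<forall>e\<in>Fk k. \<forall>e'\<in>Fk k. Bop e e' = (\<lambda>x. 0)))
    \<and> (\<forall>j k::int^3. j \<noteq> 0 \<longrightarrow> k \<noteq> 0 \<longrightarrow>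
           fspan {Bop e e' | e e'. e \<in> Fk j \<and> e' \<in> Fk k} \<subseteq> fspan (Fk (j - k) \<union> Fk (j + k))
         \<and> ((\<forall>a b::real. a *\<^sub>R kr j + b *\<^sub>R kr k = 0 \<longrightarrow> a = 0 \<and> b = 0)
              \<and> norm (kr j) \<noteq> norm (kr k)
            \<longrightarrow> fspan {Bop e e' | e e'. e \<in> Fk j \<and> e' \<in> Fk k} = fspan (Fk (j - k) \<union> Fk (j + k))))
    \<and> (Fk (vector [1, 1, 1]) \<subseteq>
           fspan {Bop (Bop e e') e'' | e e' e''.
                    e \<in> Fk (vector [1,0,0]) \<union> Fk (vector [0,1,0]) \<union> Fk (vector [0,0,1])
                  \<and> e' \<in> Fk (vector [1,0,0]) \<union> Fk (vector [0,1,0]) \<union> Fk (vector [0,0,1])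
                  \<and> e'' \<in> Fk (vector [1,0,0]) \<union> Fk (vector [0,1,0]) \<union> Fk (vector [0,0,1])}))"
proof -
  have p1: "\<forall>k::int^3. k \<noteq> 0 \<longrightarrow> (\<forall>e\<in>Fk k. \<forall>e'\<in>Fk k. Bop e e' = (\<lambda>x. 0))"
    using part1 by blast
  have p3: "Fk (vector [1, 1, 1]) \<subseteq>
           fspan {Bop (Bop e e') e'' | e e' e''.
                    e \<in> Fk (vector [1,0,0]) \<union> Fk (vector [0,1,0]) \<union> Fk (vector [0,0,1])
                  \<and> e' \<in> Fk (vector [1,0,0]) \<union> Fk (vector [0,1,0]) \<union> Fk (vector [0,0,1])
                  \<and> e'' \<in> Fk (vector [1,0,0]) \<union> Fk (vector [0,1,0]) \<union> Fk (vector [0,0,1])}"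
    using part3_main unfolding qq_eq S3_def U_def e1_def e2_def e3_def .
  show ?thesis
    using p1 p3 part2a part2b by blast
qed

end
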